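(* For $|q|<1$ ($q\neq0$) and every $m\in\mathbb Z$, $$\mathbf J_m(q)^{-1}=\begin{pmatrix}1 & L^{(0)}_m(q) & -L^{(1)}_m(q)\\ 0 & -G^{(0)}_{m+1}(q) & G^{(1)}_{m+1}(q)\\ 0 & G^{(0)}_m(q) & -G^{(1)}_m(q)\end{pmatrix},$$ where $L^{(0)}_m=G^{(0)}_{m+1}G^{(2)}_m-G^{(0)}_mG^{(2)}_{m+1}$ and $L^{(1)}_m=G^{(1)}_{m+1}G^{(2)}_m-G^{(1)}_mG^{(2)}_{m+1}$ (all evaluated at $q$). Moreover $$L^{(0)}_m(q)=2E^{(0)}_1(q)-1-m+\sum_{n\ge1}(-1)^n\frac{q^{n(n+1)/2}}{(q;q)_n^2}\frac{q^{mn+n}}{1-q^n},$$ $$L^{(1)}_m(q)=-\tfrac38-2E^{(0)}_1(q)^2+2E^{(0)}_1(q)-E^{(0)}_2(q)-\tfrac1{24}E_2(q)+2mE^{(0)}_1(q)-m-\tfrac{m^2}2+\sum_{n\ge1}(-1)^n\frac{q^{n(n+1)/2}}{(q;q)_n^2}\frac{q^{mn+n}}{1-q^n}\Big(n+m+\tfrac12-2E^{(n)}_1(q)+\frac1{1-q^n}\Big).$$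
   Context: Notation: $(a;q)_n=\prod_{j=0}^{n-1}(1-aq^j)$. For $|q|<1$, $E_k^{(n)}(q)=\sum_{s\ge1}s^{k-1}\frac{q^{s(n+1)}}{1-q^s}$, $E_2(q)=1-24E_2^{(0)}(q)$, and $G^{(0)}_m(q)=\sum_{n\ge0}(-1)^n\frac{q^{n(n+1)/2+mn}}{(q;q)_n^2}$, $G^{(1)}_m(q)=\sum_{n\ge0}\big(n+m+\tfrac12-2E_1^{(n)}(q)\big)(-1)^n\frac{q^{n(n+1)/2+mn}}{(q;q)_n^2}$, $G^{(2)}_m(q)=\sum_{n\ge0}\Big(\tfrac12\big(n+m+\tfrac12-2E_1^{(n)}(q)\big)^2-E_2^{(n)}(q)-\tfrac1{24}E_2(q)\Big)(-1)^n\frac{q^{n(n+1)/2+mn}}{(q;q)_n^2}$. $\mathbf J_m(q)$ is the $3\times3$ matrix with rows $(1,G^{(2)}_m,G^{(2)}_{m+1})$, $(0,G^{(1)}_m,G^{(1)}_{m+1})$, $(0,G^{(0)}_m,G^{(0)}_{m+1})$. *)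

theory Defs
  imports "HOL-Analysis.Analysis"
begin

definition qpoch :: "complex \<Rightarrow> complex \<Rightarrow> nat \<Rightarrow> complex" where
  "qpoch a q n = (\<Prod>j<n. 1 - a * q ^ j)"

definition Ekn :: "nat \<Rightarrow> nat \<Rightarrow> complex \<Rightarrow> complex" where
  "Ekn k n q = (\<Sum>s. of_nat (Suc s) ^ (k - 1) * q ^ (Suc s * (n + 1)) / (1 - q ^ Suc s))"

definition E2 :: "complex \<Rightarrow> complex" where
  "E2 q = 1 - 24 * Ekn 2 0 q"

definition Gterm :: "int \<Rightarrow> complex \<Rightarrow> nat \<Rightarrow> complex" where
  "Gterm m q n = (-1) ^ n * q ^ (n * (n + 1) div 2) * q powi (m * int n) / (qpoch q q n) ^ 2"

definition A1 :: "int \<Rightarrow> complex \<Rightarrow> nat \<Rightarrow> complex" where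
  "A1 m q n = of_nat n + of_int m + 1 / 2 - 2 * Ekn 1 n q"

definition G0 :: "int \<Rightarrow> complex \<Rightarrow> complex" where
  "G0 m q = (\<Sum>n. Gterm m q n)"

definition G1 :: "int \<Rightarrow> complex \<Rightarrow> complex" where
  "G1 m q = (\<Sum>n. A1 m q n * Gterm m q n)"

definition G2 :: "int \<Rightarrow> complex \<Rightarrow> complex" where
  "G2 m q = (\<Sum>n. ((1 / 2) * (A1 m q n) ^ 2 - Ekn 2 n q - (1 / 24) * E2 q) * Gterm m q n)"

definition Jmat :: "int \<Rightarrow> complex \<Rightarrow> complex ^ 3 ^ 3" where
  "Jmat m q = vector [vector [1, G2 m q, G2 (m + 1) q],
                      vector [0, G1 m q, G1 (m + 1) q],
                      vector [0, G0 m q, G0 (m + 1) q]]"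

definition L0 :: "int \<Rightarrow> complex \<Rightarrow> complex" where
  "L0 m q = G0 (m + 1) q * G2 m q - G0 m q * G2 (m + 1) q"

definition L1 :: "int \<Rightarrow> complex \<Rightarrow> complex" where
  "L1 m q = G1 (m + 1) q * G2 m q - G1 m q * G2 (m + 1) q"

end

theory Submission
  imports Defs
begin


locale qctx =
  fixes q :: complex
  assumes q1: "norm q < 1" and q0: "q \<noteq> 0"
begin

lemma nq_le: "norm q ^ Suc n \<le> norm q"
proof -
  have "norm q ^ Suc n \<le> norm q ^ 1"
    by (rule power_decreasing) (use q1 in auto)
  then show ?thesis by simp
qed

lemma norm_qpow_le1: "norm (q ^ k) \<le> 1"
  using q1 by (simp add: norm_power power_le_one)

lemma om_pos: "0 < 1 - norm q" using q1 by simp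

lemma om_ge: "1 - norm q \<le> norm (1 - q ^ Suc n)"
proof -
  have "norm (1::complex) - norm (q ^ Suc n) \<le> norm (1 - q ^ Suc n)" by (rule norm_triangle_ineq2)
  moreover have "norm (q ^ Suc n) \<le> norm q" using nq_le[of n] by (simp only: norm_power)
  ultimately show ?thesis by simp
qed

lemma om_nz: "1 - q ^ Suc n \<noteq> 0"
  using om_ge[of n] om_pos by auto

lemma om_nz': "0 < n \<Longrightarrow> 1 - q ^ n \<noteq> 0"
  using om_nz[of "n - 1"] by simp

lemma inv_om_bound: "norm (1 / (1 - q ^ n)) \<le> 1 / (1 - norm q)"
proof (cases n)
  case 0 then show ?thesis using om_pos by simp
next
  case (Suc k)
  have "norm (1 / (1 - q ^ n)) = 1 / norm (1 - q ^ Suc k)" by (simp add: Suc norm_divide)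
  also have "\<dots> \<le> 1 / (1 - norm q)"
    by (rule divide_left_mono) (use om_ge[of k] om_pos in \<open>auto intro!: mult_pos_pos\<close>)
  finally show ?thesis .
qed

lemma qpoch_Suc: "qpoch q q (Suc n) = qpoch q q n * (1 - q ^ Suc n)"
  by (simp add: qpoch_def)

lemma qpoch_nz: "qpoch q q n \<noteq> 0"
proof (induction n)
  case 0 then show ?case by (simp add: qpoch_def)
next
  case (Suc n) then show ?case unfolding qpoch_Suc using om_nz[of n] by simp
qed

lemma tri_Suc: "Suc n * (Suc n + 1) div 2 = n * (n + 1) div 2 + Suc n"
proof -
  have "Suc n * (Suc n + 1) = n * (n + 1) + Suc n * 2" by (simp add: algebra_simps)
  then show ?thesis by simp
qed

lemma Gterm_0: "Gterm m q 0 = 1" by (simp add: Gterm_def qpoch_def)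

lemma powi_Suc: "q powi (m * int (Suc n)) = q powi (m * int n) * q powi m"
proof -
  have eq: "m * int (Suc n) = m * int n + m" by (simp add: algebra_simps)
  show ?thesis by (subst eq) (rule power_int_add, simp add: q0)
qed

lemma Gterm_Suc: "Gterm m q (Suc n) * (1 - q ^ Suc n)^2 = - (q ^ Suc n * q powi m * Gterm m q n)"
proof -
  have e: "q ^ (Suc n * (Suc n + 1) div 2) = q ^ (n * (n + 1) div 2) * q ^ Suc n"
    by (simp only: tri_Suc power_add)
  have nz: "qpoch q q n \<noteq> 0" "1 - q ^ Suc n \<noteq> 0" using qpoch_nz om_nz by auto
  show ?thesis
    unfolding Gterm_def qpoch_Suc e powi_Suc power_mult_distrib using nz
    by (simp add: field_simps)
qed

lemma Gterm_shift: "Gterm (m + int j) q n = q ^ (j * n) * Gterm m q n"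
proof -
  have eq: "(m + int j) * int n = m * int n + int (j * n)" by (simp add: algebra_simps)
  have p: "q powi ((m + int j) * int n) = q powi (m * int n) * q ^ (j * n)"
    by (subst eq, subst power_int_add) (simp_all add: q0 del: of_nat_mult)
  show ?thesis unfolding Gterm_def p using qpoch_nz by (simp add: field_simps)
qed

lemma Gterm_nat: "Gterm (int k) q n = q ^ (k * n) * Gterm 0 q n"
  using Gterm_shift[of 0 k n] by simp

lemma Gterm_norm_Suc:
  "norm (Gterm m q (Suc n)) \<le> norm q ^ Suc n * norm (q powi m) / (1 - norm q)^2 * norm (Gterm m q n)"
proof -
  have h: "norm (Gterm m q (Suc n)) * norm (1 - q ^ Suc n)^2 = norm q ^ Suc n * norm (q powi m) * norm (Gterm m q n)"
    using arg_cong[OF Gterm_Suc[of m n], of norm] by (simp only: norm_mult norm_power norm_minus_cancel)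
  have g: "(1 - norm q)^2 \<le> norm (1 - q ^ Suc n)^2"
    using om_ge[of n] om_pos by (simp add: power_mono)
  have p: "0 < (1 - norm q)^2" using om_pos by simp
  have "norm (Gterm m q (Suc n)) * (1 - norm q)^2 \<le> norm (Gterm m q (Suc n)) * norm (1 - q ^ Suc n)^2"
    by (rule mult_left_mono[OF g]) simp
  then have "norm (Gterm m q (Suc n)) * (1 - norm q)^2 \<le> norm q ^ Suc n * norm (q powi m) * norm (Gterm m q n)"
    using h by simp
  then have "norm (Gterm m q (Suc n)) \<le> norm q ^ Suc n * norm (q powi m) * norm (Gterm m q n) / (1 - norm q)^2"
    using p by (simp add: pos_le_divide_eq)
  then show ?thesis by (simp add: field_simps)
qed

lemma summable_Gn: "summable (\<lambda>n. norm (Gterm m q n) * (real n + 1)^2)"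
proof -
  define K where "K = 4 * norm (q powi m) / (1 - norm q)^2"
  have K0: "K \<ge> 0" unfolding K_def by simp
  have "(\<lambda>n. K * norm q ^ n) \<longlonglongrightarrow> 0"
    by (intro tendsto_mult_right_zero LIMSEQ_realpow_zero) (use q1 in auto)
  then have "eventually (\<lambda>n. K * norm q ^ n < 1/2) sequentially"
    by (rule order_tendstoD) simp
  then obtain N where N: "\<And>n. n \<ge> N \<Longrightarrow> K * norm q ^ n < 1/2"
    by (auto simp: eventually_sequentially)
  show ?thesis
  proof (rule summable_ratio_test[where c = "1/2" and N = N])
    fix n assume n: "n \<ge> N"
    have a: "(real (Suc n) + 1)^2 \<le> 4 * (real n + 1)^2" by (simp add: power2_eq_square algebra_simps)
    have b: "norm q ^ Suc n \<le> norm q ^ n" by (rule power_decreasing) (use q1 in auto)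
    have "norm (norm (Gterm m q (Suc n)) * (real (Suc n) + 1)^2)
          = norm (Gterm m q (Suc n)) * (real (Suc n) + 1)^2" by simp
    also have "\<dots> \<le> (norm q ^ Suc n * norm (q powi m) / (1 - norm q)^2 * norm (Gterm m q n)) * (4 * (real n + 1)^2)"
      by (intro mult_mono Gterm_norm_Suc a) auto
    also have "\<dots> = (K * norm q ^ Suc n) * (norm (Gterm m q n) * (real n + 1)^2)"
      unfolding K_def by (simp add: field_simps)
    also have "\<dots> \<le> (1/2) * (norm (Gterm m q n) * (real n + 1)^2)"
    proof (rule mult_right_mono)
      show "K * norm q ^ Suc n \<le> 1/2" using N[OF n] mult_left_mono[OF b K0] by linarith
    qed simp
    also have "\<dots> = 1/2 * norm (norm (Gterm m q n) * (real n + 1)^2)" by simp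
    finally show "norm (norm (Gterm m q (Suc n)) * (real (Suc n) + 1)^2) \<le> 1/2 * norm (norm (Gterm m q n) * (real n + 1)^2)" .
  qed simp
qed

definition good :: "(nat \<Rightarrow> complex) \<Rightarrow> bool" where
  "good w \<longleftrightarrow> (\<exists>C. \<forall>n. norm (w n) \<le> C * (real n + 1)^2)"

definition Sw :: "(nat \<Rightarrow> complex) \<Rightarrow> int \<Rightarrow> complex" where
  "Sw w m = (\<Sum>n. w n * Gterm m q n)"

lemma summable_Sw_norm: assumes "good w" shows "summable (\<lambda>n. norm (w n * Gterm m q n))"
proof -
  obtain C where C: "\<And>n. norm (w n) \<le> C * (real n + 1)^2" using assms unfolding good_def by blast
  show ?thesis
  proof (rule summable_comparison_test'[where N=0])
    show "summable (\<lambda>n. C * (norm (Gterm m q n) * (real n + 1)^2))"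
      by (intro summable_mult summable_Gn)
    fix n
    show "norm (norm (w n * Gterm m q n)) \<le> C * (norm (Gterm m q n) * (real n + 1)^2)"
      using mult_right_mono[OF C[of n], of "norm (Gterm m q n)"] by (simp add: norm_mult mult_ac)
  qed
qed

lemma summable_Sw: "good w \<Longrightarrow> summable (\<lambda>n. w n * Gterm m q n)"
  by (rule summable_norm_cancel[OF summable_Sw_norm])

lemma Sw_add: assumes "good a" "good b" shows "Sw (\<lambda>n. a n + b n) m = Sw a m + Sw b m"
  unfolding Sw_def distrib_right using suminf_add[OF summable_Sw[OF assms(1)] summable_Sw[OF assms(2)]] by simp

lemma Sw_diff: assumes "good a" "good b" shows "Sw (\<lambda>n. a n - b n) m = Sw a m - Sw b m"
  unfolding Sw_def left_diff_distrib using suminf_diff[OF summable_Sw[OF assms(1)] summable_Sw[OF assms(2)]] by simp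

lemma Sw_cmult: assumes "good a" shows "Sw (\<lambda>n. c * a n) m = c * Sw a m"
  unfolding Sw_def using suminf_mult[OF summable_Sw[OF assms], of c] by (simp add: mult.assoc)

lemma Sw_single: "Sw (\<lambda>n. if n = 0 then c else 0) m = c"
proof -
  have "(\<lambda>n. (if n = 0 then c else 0) * Gterm m q n) = (\<lambda>n. if n = 0 then c else 0)"
    by (auto simp: Gterm_0)
  moreover have "(\<lambda>n::nat. if n = 0 then c else 0) sums c" using sums_single[of 0 "\<lambda>_. c"] by simp
  ultimately show ?thesis unfolding Sw_def by (simp add: sums_iff)
qed

lemma Sw_shift: "Sw w (m + int j) = Sw (\<lambda>n. w n * q ^ (j * n)) m"
  unfolding Sw_def Gterm_shift by (simp add: mult_ac)

lemma Sw_shift1: "Sw w (m + 1) = Sw (\<lambda>n. w n * q ^ n) m"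
  using Sw_shift[of w m 1] by simp

lemma Sw_shift2: "Sw w (m + 2) = Sw (\<lambda>n. w n * q ^ (2 * n)) m"
  using Sw_shift[of w m 2] by simp

lemma good_bounded: assumes "\<And>n. norm (w n) \<le> B" shows "good w"
  unfolding good_def
proof (intro exI allI)
  fix n
  have o: "1 \<le> (real n + 1)^2" by (rule one_le_power) simp
  have "norm (w n) \<le> \<bar>B\<bar>" using assms[of n] by linarith
  also have "\<dots> \<le> \<bar>B\<bar> * (real n + 1)^2" using mult_left_mono[OF o, of "\<bar>B\<bar>"] by simp
  finally show "norm (w n) \<le> \<bar>B\<bar> * (real n + 1)^2" .
qed

lemma good_lin: assumes "\<And>n. norm (w n) \<le> A * (real n + 1)" shows "good w"
  unfolding good_def
proof (intro exI allI)
  fix n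
  have o: "real n + 1 \<le> (real n + 1)^2"
    using mult_left_mono[of 1 "real n + 1" "real n + 1"] by (simp add: power2_eq_square)
  have "A * (real n + 1) \<le> \<bar>A\<bar> * (real n + 1)" by (rule mult_right_mono) auto
  then have "norm (w n) \<le> \<bar>A\<bar> * (real n + 1)"
    using assms[of n] by linarith
  also have "\<dots> \<le> \<bar>A\<bar> * (real n + 1)^2" using mult_left_mono[OF o, of "\<bar>A\<bar>"] by simp
  finally show "norm (w n) \<le> \<bar>A\<bar> * (real n + 1)^2" .
qed

lemma good_add [simp]: assumes "good a" "good b" shows "good (\<lambda>n. a n + b n)"
proof -
  obtain C1 where 1: "\<And>n. norm (a n) \<le> C1 * (real n + 1)^2" using assms(1) unfolding good_def by blast
  obtain C2 where 2: "\<And>n. norm (b n) \<le> C2 * (real n + 1)^2" using assms(2) unfolding good_def by blast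
  show ?thesis unfolding good_def
  proof (intro exI allI)
    fix n show "norm (a n + b n) \<le> (C1 + C2) * (real n + 1)^2"
      unfolding distrib_right using norm_triangle_ineq[of "a n" "b n"] 1[of n] 2[of n] by linarith
  qed
qed

lemma good_diff [simp]: assumes "good a" "good b" shows "good (\<lambda>n. a n - b n)"
proof -
  obtain C1 where 1: "\<And>n. norm (a n) \<le> C1 * (real n + 1)^2" using assms(1) unfolding good_def by blast
  obtain C2 where 2: "\<And>n. norm (b n) \<le> C2 * (real n + 1)^2" using assms(2) unfolding good_def by blast
  show ?thesis unfolding good_def
  proof (intro exI allI)
    fix n show "norm (a n - b n) \<le> (C1 + C2) * (real n + 1)^2"
      unfolding distrib_right using norm_triangle_ineq4[of "a n" "b n"] 1[of n] 2[of n] by linarith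
  qed
qed

lemma good_cmult [simp]: assumes "good a" shows "good (\<lambda>n. c * a n)"
proof -
  obtain C1 where 1: "\<And>n. norm (a n) \<le> C1 * (real n + 1)^2" using assms(1) unfolding good_def by blast
  show ?thesis unfolding good_def
  proof (intro exI allI)
    fix n show "norm (c * a n) \<le> (norm c * C1) * (real n + 1)^2"
      using mult_left_mono[OF 1[of n] norm_ge_zero[of c]] by (simp add: norm_mult mult.assoc)
  qed
qed

lemma good_mult_bounded: assumes "good a" "\<And>n. norm (b n) \<le> B" shows "good (\<lambda>n. a n * b n)"
proof -
  obtain C1 where 1: "\<And>n. norm (a n) \<le> C1 * (real n + 1)^2" using assms(1) unfolding good_def by blast
  show ?thesis unfolding good_def
  proof (intro exI allI)
    fix n
    have "norm (a n * b n) = norm (a n) * norm (b n)" by (simp add: norm_mult)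
    also have "\<dots> \<le> (C1 * (real n + 1)^2) * B"
      by (rule mult_mono[OF 1[of n] assms(2)[of n] order_trans[OF norm_ge_zero 1[of n]] norm_ge_zero])
    finally show "norm (a n * b n) \<le> (C1 * B) * (real n + 1)^2" by (simp add: mult_ac)
  qed
qed

lemma good_prod_lin:
  assumes "\<And>n. norm (a n) \<le> A * (real n + 1)" "\<And>n. norm (b n) \<le> B * (real n + 1)"
  shows "good (\<lambda>n. a n * b n)"
  unfolding good_def
proof (intro exI allI)
  fix n
  have "norm (a n * b n) = norm (a n) * norm (b n)" by (simp add: norm_mult)
  also have "\<dots> \<le> (A * (real n + 1)) * (B * (real n + 1))"
    by (rule mult_mono[OF assms(1)[of n] assms(2)[of n] order_trans[OF norm_ge_zero assms(1)[of n]] norm_ge_zero])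
  finally show "norm (a n * b n) \<le> (A * B) * (real n + 1)^2" by (simp add: mult_ac power2_eq_square)
qed

lemma good_one [simp]: "good (\<lambda>_. c)"
  by (rule good_bounded[of _ "norm c"]) simp

lemma good_qpow [simp]: "good a \<Longrightarrow> good (\<lambda>n. a n * q ^ n)"
  by (rule good_mult_bounded[of _ _ 1]) (simp_all add: norm_qpow_le1)

lemma good_qpow2 [simp]: "good a \<Longrightarrow> good (\<lambda>n. a n * q ^ (2 * n))"
  by (rule good_mult_bounded[of _ _ 1]) (simp_all add: norm_qpow_le1)


lemma aux_cancel: fixes X b :: complex assumes "1 - b \<noteq> 0" shows "X / (1 - b) - X * b / (1 - b) = X"
proof -
  have "X / (1 - b) - X * b / (1 - b) = X * (1 - b) / (1 - b)" by (simp add: diff_divide_distrib right_diff_distrib)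
  then show ?thesis using assms by simp
qed

lemma summable_nr: assumes "0 \<le> r" "r < 1" shows "summable (\<lambda>s. real (Suc s) * r ^ Suc s)"
proof -
  have "(\<lambda>s. of_nat (Suc s) * r ^ s) sums (1 / (1 - r)^2)" using geometric_deriv_sums[of r] assms by simp
  from summable_mult[OF sums_summable[OF this], of r] show ?thesis by (simp add: mult_ac)
qed

lemma Ekn_term_bound: assumes "k \<le> 2"
  shows "norm (of_nat (Suc s) ^ (k - 1) * q ^ (Suc s * (n + 1)) / (1 - q ^ Suc s) :: complex)
         \<le> real (Suc s) * norm q ^ Suc s / (1 - norm q)"
proof -
  have a: "real (Suc s) ^ (k - 1) \<le> real (Suc s)"
  proof -
    have "k - 1 = 0 \<or> k - 1 = 1" using assms by arith
    then show ?thesis by auto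
  qed
  have b: "norm q ^ (Suc s * (n + 1)) \<le> norm q ^ Suc s" by (rule power_decreasing) (use q1 in auto)
  have "norm (of_nat (Suc s) ^ (k - 1) * q ^ (Suc s * (n + 1)) / (1 - q ^ Suc s) :: complex)
       = real (Suc s) ^ (k - 1) * norm q ^ (Suc s * (n + 1)) / norm (1 - q ^ Suc s)"
    by (simp only: norm_mult norm_divide norm_power norm_of_nat)
  also have "\<dots> \<le> real (Suc s) * norm q ^ Suc s / (1 - norm q)"
  proof (rule frac_le)
    show "0 \<le> real (Suc s) * norm q ^ Suc s" by simp
    show "real (Suc s) ^ (k - 1) * norm q ^ (Suc s * (n + 1)) \<le> real (Suc s) * norm q ^ Suc s"
      by (rule mult_mono[OF a b]) simp_all
    show "0 < 1 - norm q" by (rule om_pos)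
    show "1 - norm q \<le> norm (1 - q ^ Suc s)" by (rule om_ge)
  qed
  finally show ?thesis .
qed

lemma summable_Ekn_bound: "summable (\<lambda>s. real (Suc s) * norm q ^ Suc s / (1 - norm q))"
  by (intro summable_divide summable_nr) (use q1 in auto)

lemma summable_Ekn: assumes "k \<le> 2"
  shows "summable (\<lambda>s. of_nat (Suc s) ^ (k - 1) * q ^ (Suc s * (n + 1)) / (1 - q ^ Suc s) :: complex)"
  by (rule summable_comparison_test'[where N=0, OF summable_Ekn_bound]) (rule Ekn_term_bound[OF assms])

definition EB :: real where "EB = (\<Sum>s. real (Suc s) * norm q ^ Suc s / (1 - norm q))"

lemma Ekn_bound: assumes "k \<le> 2" shows "norm (Ekn k n q) \<le> EB"
  unfolding Ekn_def EB_def
  by (rule norm_suminf_le) (rule Ekn_term_bound[OF assms], rule summable_Ekn_bound)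

lemma EB_nonneg: "0 \<le> EB"
  using norm_ge_zero[of "Ekn 1 0 q"] Ekn_bound[of 1 0] by linarith

lemma Ekn1_diff: "Ekn 1 n q - Ekn 1 (Suc n) q = q ^ Suc n / (1 - q ^ Suc n)"
proof -
  define x where "x = q ^ Suc n"
  have x1: "norm x < 1" unfolding x_def norm_power using nq_le[of n] q1 by linarith
  have "Ekn 1 n q - Ekn 1 (Suc n) q
     = (\<Sum>s. of_nat (Suc s) ^ (1 - 1) * q ^ (Suc s * (n + 1)) / (1 - q ^ Suc s)
           - of_nat (Suc s) ^ (1 - 1) * q ^ (Suc s * (Suc n + 1)) / (1 - q ^ Suc s))"
    unfolding Ekn_def by (rule suminf_diff) (rule summable_Ekn, simp)+
  also have "\<dots> = (\<Sum>s. x * x ^ s)"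
  proof (rule arg_cong[where f=suminf], rule ext)
    fix s
    have nz: "1 - q ^ Suc s \<noteq> 0" by (rule om_nz)
    have e1: "q ^ (Suc s * (n + 1)) = x * x ^ s"
    proof -
      have "Suc s * (n + 1) = Suc n * Suc s" by simp
      then have "q ^ (Suc s * (n + 1)) = (q ^ Suc n) ^ Suc s" by (simp only: power_mult)
      then show ?thesis unfolding x_def by (simp only: power_Suc)
    qed
    have e2: "q ^ (Suc s * (Suc n + 1)) = x * x ^ s * q ^ Suc s"
    proof -
      have "Suc s * (Suc n + 1) = Suc s * (n + 1) + Suc s" by simp
      then have "q ^ (Suc s * (Suc n + 1)) = q ^ (Suc s * (n + 1)) * q ^ Suc s" by (simp only: power_add)
      then show ?thesis unfolding e1 .
    qed
    show "of_nat (Suc s) ^ (1 - 1) * q ^ (Suc s * (n + 1)) / (1 - q ^ Suc s)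
           - of_nat (Suc s) ^ (1 - 1) * q ^ (Suc s * (Suc n + 1)) / (1 - q ^ Suc s) = x * x ^ s"
      unfolding e1 e2 using aux_cancel[OF nz, of "x * x ^ s"] by simp
  qed
  also have "\<dots> = x / (1 - x)"
    using suminf_mult[OF summable_geometric[OF x1], of x] suminf_geometric[OF x1] by simp
  finally show ?thesis by (simp only: x_def)
qed

lemma Ekn2_diff: "Ekn 2 n q - Ekn 2 (Suc n) q = q ^ Suc n / (1 - q ^ Suc n)^2"
proof -
  define x where "x = q ^ Suc n"
  have x1: "norm x < 1" unfolding x_def norm_power using nq_le[of n] q1 by linarith
  have "Ekn 2 n q - Ekn 2 (Suc n) q
     = (\<Sum>s. of_nat (Suc s) ^ (2 - 1) * q ^ (Suc s * (n + 1)) / (1 - q ^ Suc s)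
           - of_nat (Suc s) ^ (2 - 1) * q ^ (Suc s * (Suc n + 1)) / (1 - q ^ Suc s))"
    unfolding Ekn_def by (rule suminf_diff) (rule summable_Ekn, simp)+
  also have "\<dots> = (\<Sum>s. x * (of_nat (Suc s) * x ^ s))"
  proof (rule arg_cong[where f=suminf], rule ext)
    fix s
    have nz: "1 - q ^ Suc s \<noteq> 0" by (rule om_nz)
    have e1: "q ^ (Suc s * (n + 1)) = x * x ^ s"
    proof -
      have "Suc s * (n + 1) = Suc n * Suc s" by simp
      then have "q ^ (Suc s * (n + 1)) = (q ^ Suc n) ^ Suc s" by (simp only: power_mult)
      then show ?thesis unfolding x_def by (simp only: power_Suc)
    qed
    have e2: "q ^ (Suc s * (Suc n + 1)) = x * x ^ s * q ^ Suc s"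
    proof -
      have "Suc s * (Suc n + 1) = Suc s * (n + 1) + Suc s" by simp
      then have "q ^ (Suc s * (Suc n + 1)) = q ^ (Suc s * (n + 1)) * q ^ Suc s" by (simp only: power_add)
      then show ?thesis unfolding e1 .
    qed
    show "of_nat (Suc s) ^ (2 - 1) * q ^ (Suc s * (n + 1)) / (1 - q ^ Suc s)
           - of_nat (Suc s) ^ (2 - 1) * q ^ (Suc s * (Suc n + 1)) / (1 - q ^ Suc s) = x * (of_nat (Suc s) * x ^ s)"
      unfolding e1 e2 using aux_cancel[OF nz, of "of_nat (Suc s) * (x * x ^ s)"] by (simp add: mult_ac)
  qed
  also have "\<dots> = x * (1 / (1 - x)^2)"
  proof -
    have "(\<lambda>s. of_nat (Suc s) * x ^ s) sums (1 / (1 - x)^2)" by (rule geometric_deriv_sums[OF x1])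
    then show ?thesis using suminf_mult[OF sums_summable, of _ _ x] sums_unique by metis
  qed
  finally show ?thesis by (simp add: x_def)
qed

definition uu :: "nat \<Rightarrow> complex" where "uu n = of_nat n - 2 * Ekn 1 n q"
definition vv :: "nat \<Rightarrow> complex" where "vv n = - Ekn 2 n q - (1/24) * E2 q"
definition yy :: "nat \<Rightarrow> complex" where "yy n = (1/2) * (uu n)^2 + vv n"
definition sg :: "nat \<Rightarrow> complex" where "sg n = (if n = 0 then 0 else q ^ n / (1 - q ^ n))"
definition s1 :: "nat \<Rightarrow> complex" where "s1 n = sg n * (uu n + 1 / (1 - q ^ n))"

lemma uu_lin: "norm (uu n) \<le> (1 + 2 * EB) * (real n + 1)"
proof -
  have "norm (uu n) \<le> norm (of_nat n :: complex) + norm (2 * Ekn 1 n q)"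
    unfolding uu_def by (rule norm_triangle_ineq4)
  also have "\<dots> \<le> real n + 2 * EB" using Ekn_bound[of 1 n] by (simp add: norm_mult)
  also have "\<dots> \<le> (1 + 2 * EB) * (real n + 1)"
  proof -
    have h: "0 \<le> EB * real n" using EB_nonneg by simp
    have "(1 + 2 * EB) * (real n + 1) = real n + 2 * EB + 1 + 2 * (EB * real n)" by (simp add: algebra_simps)
    then show ?thesis using h by linarith
  qed
  finally show ?thesis .
qed

lemma good_uu [simp]: "good uu" by (rule good_lin[OF uu_lin])

lemma vv_bound: "norm (vv n) \<le> EB + norm (E2 q) / 24"
proof -
  have "norm (vv n) \<le> norm (Ekn 2 n q) + norm ((1/24) * E2 q)"
    unfolding vv_def using norm_triangle_ineq4[of "- Ekn 2 n q" "(1/24) * E2 q"] by simp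
  then show ?thesis using Ekn_bound[of 2 n] by (simp add: norm_mult)
qed

lemma good_yy [simp]: "good yy"
proof -
  have "good (\<lambda>n. (1/2) * (uu n * uu n) + vv n)"
    by (intro good_add good_cmult good_prod_lin[OF uu_lin uu_lin] good_bounded[OF vv_bound])
  then show ?thesis unfolding yy_def by (simp add: power2_eq_square)
qed

lemma sg_bound: "norm (sg n) \<le> 1 / (1 - norm q)"
proof (cases "n = 0")
  case True then show ?thesis using om_pos by (simp add: sg_def)
next
  case False
  have "norm (sg n) = norm (q ^ n) * norm (1 / (1 - q ^ n))" using False by (simp add: sg_def norm_mult norm_divide)
  also have "\<dots> \<le> 1 * (1 / (1 - norm q))"
    by (rule mult_mono[OF norm_qpow_le1 inv_om_bound]) simp_all
  finally show ?thesis by simp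
qed

lemma good_sg [simp]: "good sg" by (rule good_bounded[OF sg_bound])

lemma good_s1 [simp]: "good s1"
proof -
  have "good (\<lambda>n. uu n * sg n + sg n * (1 / (1 - q ^ n)))"
  proof (rule good_add)
    show "good (\<lambda>n. uu n * sg n)" by (rule good_mult_bounded[OF good_uu sg_bound])
    show "good (\<lambda>n. sg n * (1 / (1 - q ^ n)))"
      by (rule good_mult_bounded[OF good_sg inv_om_bound])
  qed
  then show ?thesis unfolding s1_def by (simp add: algebra_simps)
qed

lemma uu_diff: "0 < n \<Longrightarrow> uu n - uu (n - 1) = (1 + q ^ n) / (1 - q ^ n)"
proof -
  assume n: "0 < n"
  then obtain k where k: "n = Suc k" by (cases n) auto
  have nz: "1 - q ^ Suc k \<noteq> 0" by (rule om_nz)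
  have "uu n - uu (n - 1) = 1 + 2 * (Ekn 1 k q - Ekn 1 (Suc k) q)" unfolding uu_def k by (simp add: algebra_simps)
  also have "\<dots> = (1 + q ^ n) / (1 - q ^ n)" unfolding Ekn1_diff k using nz by (simp add: field_simps)
  finally show ?thesis .
qed

lemma vv_diff: "0 < n \<Longrightarrow> vv n - vv (n - 1) = q ^ n / (1 - q ^ n)^2"
proof -
  assume n: "0 < n"
  then obtain k where k: "n = Suc k" by (cases n) auto
  have "vv n - vv (n - 1) = Ekn 2 k q - Ekn 2 (Suc k) q" unfolding vv_def k by simp
  also have "\<dots> = q ^ n / (1 - q ^ n)^2" unfolding Ekn2_diff k ..
  finally show ?thesis .
qed


lemma use_eq1: fixes X Y K A B :: complex assumes "X - Y = K * (A - B)" "A = B" shows "X = Y"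
  using assms by simp

lemma use_eq2: fixes X Y Ka Aa Ba Kb Ab Bb :: complex
  assumes "X - Y = Ka * (Aa - Ba) + Kb * (Ab - Bb)" "Aa = Ba" "Ab = Bb" shows "X = Y"
  using assms by simp

lemma aux2: fixes x :: complex assumes "1 - x \<noteq> 0" shows "(1 + x) / (1 - x) * (1 - x)^2 = 1 - x * x"
proof -
  have h: "(1 + x) / (1 - x) * (1 - x) = 1 + x" using assms by (simp add: field_simps)
  show ?thesis by (rule use_eq1[where K="1 - x", OF _ h]) algebra
qed

lemma aux_sg: fixes x :: complex assumes "1 - x \<noteq> 0" shows "x / (1 - x) * x - x / (1 - x) = - x"
proof -
  have h: "x / (1 - x) * (1 - x) = x" using assms by (simp add: field_simps)
  show ?thesis by (rule use_eq1[where K="-1", OF _ h]) algebra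
qed

lemma aux_s1: fixes x u :: complex assumes "1 - x \<noteq> 0"
  shows "x / (1 - x) * (u + 1 / (1 - x)) * x - x / (1 - x) * (u + 1 / (1 - x)) = - (u * x) - x / (1 - x)"
proof -
  have h: "x / (1 - x) * (1 - x) = x" using assms by (simp add: field_simps)
  show ?thesis by (rule use_eq1[where K="- (u + 1 / (1 - x))", OF _ h]) algebra
qed

lemma aux3: fixes a x T S V0 :: complex
  assumes "T * (1 - x) = 1 + x" "S * (1 - x)^2 = x"
  shows "((1/2) * a^2 + (V0 + S) - ((1/2) * (a - T)^2 + V0)) * (1 - x)^2 = - ((1/2) * (x * x + 1)) - a * (x * x) + a"
  by (rule use_eq2[where Ka="a * (1 - x) - (T * (1 - x) + 1 + x) / 2" and Kb=1, OF _ assms]) algebra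

lemma solveR: fixes a b c r k :: complex assumes "a - (2 - k) * b + c = r" shows "a = (2 - k) * b - c + r"
  by (rule use_eq1[where K=1, OF _ assms]) algebra

lemma qq: "q ^ (2 * n) = q ^ n * q ^ n" by (simp add: mult_2 power_add)

lemma good_single [simp]: "good (\<lambda>n. if n = 0 then c else 0)"
  by (rule good_bounded[of _ "norm c"]) simp

lemma good_qp [simp]: "good (\<lambda>n. q ^ n)"
  by (rule good_bounded[of _ 1]) (rule norm_qpow_le1)

lemma good_qp2 [simp]: "good (\<lambda>n. q ^ (2 * n))"
  by (rule good_bounded[of _ 1]) (rule norm_qpow_le1)

lemma Sw2: "good a \<Longrightarrow> good b \<Longrightarrow> Sw (\<lambda>n. k1 * a n + k2 * b n) m = k1 * Sw a m + k2 * Sw b m"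
  by (simp add: Sw_add Sw_cmult)

lemma Sw3: "good a \<Longrightarrow> good b \<Longrightarrow> good c \<Longrightarrow>
  Sw (\<lambda>n. k1 * a n + k2 * b n + k3 * c n) m = k1 * Sw a m + k2 * Sw b m + k3 * Sw c m"
  by (simp add: Sw_add Sw_cmult)

lemma Sw5: "good a \<Longrightarrow> good b \<Longrightarrow> good c \<Longrightarrow> good d \<Longrightarrow> good e \<Longrightarrow>
  Sw (\<lambda>n. k1 * a n + k2 * b n + k3 * c n + k4 * d n + k5 * e n) m
   = k1 * Sw a m + k2 * Sw b m + k3 * Sw c m + k4 * Sw d m + k5 * Sw e m"
  by (simp add: Sw_add Sw_cmult)

lemma Sw_rec: assumes "good w"
  shows "Sw w (m + 2) - (2 - q powi (m + 1)) * Sw w (m + 1) + Sw w m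
       = Sw (\<lambda>n. if n = 0 then 0 else (w n - w (n - 1)) * (1 - q ^ n)^2) m"
proof -
  define c where "c = q powi (m + 1)"
  define h where "h n = (if n = 0 then 0 else w (n - 1) * (1 - q ^ n)^2 * Gterm m q n)" for n
  have gw1: "good (\<lambda>n. w n * q ^ n)" using assms by simp
  have gw2: "good (\<lambda>n. w n * q ^ (2 * n))" using assms by simp
  have b4: "norm ((1 - q ^ n)^2) \<le> 4" for n
  proof -
    have "norm (1 - q ^ n) \<le> 2" using norm_triangle_ineq4[of 1 "q ^ n"] norm_qpow_le1[of n] by simp
    then have "norm (1 - q ^ n) ^ 2 \<le> 2 ^ 2" by (rule power_mono) simp
    then show ?thesis by (simp add: norm_power)
  qed
  have gw3: "good (\<lambda>n. w n * (1 - q ^ n)^2)" by (rule good_mult_bounded[OF assms b4])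
  have hg: "h (Suc n) = - (c * (w n * q ^ n * Gterm m q n))" for n
  proof -
    have "h (Suc n) = w n * (Gterm m q (Suc n) * (1 - q ^ Suc n)^2)" by (simp add: h_def mult_ac)
    also have "\<dots> = w n * (- (q ^ Suc n * q powi m * Gterm m q n))" by (simp only: Gterm_Suc)
    also have "\<dots> = - (c * (w n * q ^ n * Gterm m q n))"
      unfolding c_def by (simp add: power_int_add q0 mult_ac)
    finally show ?thesis .
  qed
  have h0: "h 0 = 0" by (simp add: h_def)
  have sf: "(\<lambda>n. w n * (1 - q ^ n)^2 * Gterm m q n) sums Sw (\<lambda>n. w n * (1 - q ^ n)^2) m"
    unfolding Sw_def by (rule summable_sums[OF summable_Sw[OF gw3]])
  have sgc: "(\<lambda>n. c * (w n * q ^ n * Gterm m q n)) sums (c * Sw (\<lambda>n. w n * q ^ n) m)"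
    unfolding Sw_def by (rule sums_mult[OF summable_sums[OF summable_Sw[OF gw1]]])
  have sh: "h sums (- (c * Sw (\<lambda>n. w n * q ^ n) m))"
  proof -
    have "(\<lambda>n. h (Suc n)) sums (- (c * Sw (\<lambda>n. w n * q ^ n) m))" unfolding hg by (rule sums_minus[OF sgc])
    then show ?thesis using sums_Suc_iff[of h] h0 by simp
  qed
  have "(\<lambda>n. w n * (1 - q ^ n)^2 * Gterm m q n - h n) sums
        (Sw (\<lambda>n. w n * (1 - q ^ n)^2) m - - (c * Sw (\<lambda>n. w n * q ^ n) m))"
    by (rule sums_diff[OF sf sh])
  moreover have "(\<lambda>n. w n * (1 - q ^ n)^2 * Gterm m q n - h n)
     = (\<lambda>n. (if n = 0 then 0 else (w n - w (n - 1)) * (1 - q ^ n)^2) * Gterm m q n)"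
    by (rule ext) (simp add: h_def algebra_simps)
  ultimately have R: "Sw (\<lambda>n. if n = 0 then 0 else (w n - w (n - 1)) * (1 - q ^ n)^2) m
       = Sw (\<lambda>n. w n * (1 - q ^ n)^2) m + c * Sw (\<lambda>n. w n * q ^ n) m"
    unfolding Sw_def by (simp add: sums_iff)
  have L: "Sw (\<lambda>n. w n * (1 - q ^ n)^2) m = 1 * Sw (\<lambda>n. w n * q ^ (2 * n)) m + (-2) * Sw (\<lambda>n. w n * q ^ n) m + 1 * Sw w m"
  proof -
    have "Sw (\<lambda>n. w n * (1 - q ^ n)^2) m = Sw (\<lambda>n. 1 * (w n * q ^ (2 * n)) + (-2) * (w n * q ^ n) + 1 * w n) m"
      by (rule arg_cong[where f="\<lambda>f. Sw f m"], rule ext) (unfold qq, simp add: power2_eq_square algebra_simps)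
    also have "\<dots> = 1 * Sw (\<lambda>n. w n * q ^ (2 * n)) m + (-2) * Sw (\<lambda>n. w n * q ^ n) m + 1 * Sw w m"
      by (rule Sw3[OF gw2 gw1 assms])
    finally show ?thesis .
  qed
  have S: "Sw w (m + 2) = Sw (\<lambda>n. w n * q ^ (2 * n)) m" "Sw w (m + 1) = Sw (\<lambda>n. w n * q ^ n) m"
    by (rule Sw_shift2, rule Sw_shift1)
  show ?thesis unfolding R L S c_def[symmetric] by algebra
qed

lemma recP: "Sw (\<lambda>_. 1) (m + 2) - (2 - q powi (m + 1)) * Sw (\<lambda>_. 1) (m + 1) + Sw (\<lambda>_. 1) m = 0"
proof -
  have fz: "(\<lambda>n. (if n = 0 then 0 else ((1::complex) - 1) * (1 - q ^ n)^2) * Gterm m q n) = (\<lambda>n. 0)"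
    by (rule ext) simp
  have z: "Sw (\<lambda>n. if n = 0 then 0 else ((1::complex) - 1) * (1 - q ^ n)^2) m = 0"
    unfolding Sw_def fz by simp
  show ?thesis unfolding Sw_rec[where w="\<lambda>_. 1" and m=m, OF good_one] z ..
qed

lemma recU: "Sw uu (m + 2) - (2 - q powi (m + 1)) * Sw uu (m + 1) + Sw uu m = Sw (\<lambda>_. 1) m - Sw (\<lambda>_. 1) (m + 2)"
proof -
  have "Sw (\<lambda>n. if n = 0 then 0 else (uu n - uu (n - 1)) * (1 - q ^ n)^2) m = Sw (\<lambda>n. 1 * 1 + (-1) * q ^ (2 * n)) m"
  proof (rule arg_cong[where f="\<lambda>f. Sw f m"], rule ext)
    fix n show "(if n = 0 then 0 else (uu n - uu (n - 1)) * (1 - q ^ n)^2) = 1 * 1 + (-1) * q ^ (2 * n)"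
    proof (cases "n = 0")
      case False
      then have p: "0 < n" by simp
      have nz: "1 - q ^ n \<noteq> 0" by (rule om_nz'[OF p])
      have "(uu n - uu (n - 1)) * (1 - q ^ n)^2 = 1 - q ^ n * q ^ n"
        unfolding uu_diff[OF p] by (rule aux2[OF nz])
      then show ?thesis using False by (simp add: qq)
    qed simp
  qed
  also have "\<dots> = 1 * Sw (\<lambda>_. 1) m + (-1) * Sw (\<lambda>n. q ^ (2 * n)) m"
    by (rule Sw2) simp_all
  finally have X: "Sw (\<lambda>n. if n = 0 then 0 else (uu n - uu (n - 1)) * (1 - q ^ n)^2) m
     = 1 * Sw (\<lambda>_. 1) m + (-1) * Sw (\<lambda>n. q ^ (2 * n)) m" .
  have s2: "Sw (\<lambda>_. 1) (m + 2) = Sw (\<lambda>n. q ^ (2 * n)) m" using Sw_shift2[of "\<lambda>_. 1" m] by simp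
  show ?thesis unfolding Sw_rec[OF good_uu] X s2 by simp
qed

lemma recV: "Sw yy (m + 2) - (2 - q powi (m + 1)) * Sw yy (m + 1) + Sw yy m
   = 1 - (Sw (\<lambda>_. 1) (m + 2) + Sw (\<lambda>_. 1) m) / 2 - Sw uu (m + 2) + Sw uu m"
proof -
  have "Sw (\<lambda>n. if n = 0 then 0 else (yy n - yy (n - 1)) * (1 - q ^ n)^2) m
      = Sw (\<lambda>n. 1 * (if n = 0 then 1 else 0) + (-1/2) * q ^ (2 * n) + (-1/2) * 1 + (-1) * (uu n * q ^ (2 * n)) + 1 * uu n) m"
  proof (rule arg_cong[where f="\<lambda>f. Sw f m"], rule ext)
    fix n
    show "(if n = 0 then 0 else (yy n - yy (n - 1)) * (1 - q ^ n)^2) = 1 * (if n = 0 then 1 else 0) + (-1/2) * q ^ (2 * n) + (-1/2) * 1 + (-1) * (uu n * q ^ (2 * n)) + 1 * uu n"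
    proof (cases "n = 0")
      case True then show ?thesis by simp
    next
      case False
      then have p: "0 < n" by simp
      have nz: "1 - q ^ n \<noteq> 0" by (rule om_nz'[OF p])
      have u1: "uu (n - 1) = uu n - (1 + q ^ n) / (1 - q ^ n)" using uu_diff[OF p] by (simp add: algebra_simps)
      have v1: "vv n = vv (n - 1) + q ^ n / (1 - q ^ n)^2" using vv_diff[OF p] by (simp add: algebra_simps)
      have H3: "(1 + q ^ n) / (1 - q ^ n) * (1 - q ^ n) = 1 + q ^ n" using nz by (simp add: field_simps)
      have H4: "q ^ n / (1 - q ^ n)^2 * (1 - q ^ n)^2 = q ^ n" using nz by (simp add: field_simps)
      have "(yy n - yy (n - 1)) * (1 - q ^ n)^2 = - ((1/2) * (q ^ n * q ^ n + 1)) - uu n * (q ^ n * q ^ n) + uu n"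
        unfolding yy_def u1 v1 by (rule aux3[OF H3 H4])
      then show ?thesis using False unfolding qq by (simp add: algebra_simps)
    qed
  qed
  also have "\<dots> = 1 * Sw (\<lambda>n. if n = 0 then 1 else 0) m + (-1/2) * Sw (\<lambda>n. q ^ (2 * n)) m + (-1/2) * Sw (\<lambda>_. 1) m + (-1) * Sw (\<lambda>n. uu n * q ^ (2 * n)) m + 1 * Sw uu m"
    by (rule Sw5) simp_all
  finally have X: "Sw (\<lambda>n. if n = 0 then 0 else (yy n - yy (n - 1)) * (1 - q ^ n)^2) m
      = 1 * Sw (\<lambda>n. if n = 0 then 1 else 0) m + (-1/2) * Sw (\<lambda>n. q ^ (2 * n)) m + (-1/2) * Sw (\<lambda>_. 1) m + (-1) * Sw (\<lambda>n. uu n * q ^ (2 * n)) m + 1 * Sw uu m" .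
  have s2: "Sw (\<lambda>_. 1) (m + 2) = Sw (\<lambda>n. q ^ (2 * n)) m" using Sw_shift2[of "\<lambda>_. 1" m] by simp
  have s3: "Sw uu (m + 2) = Sw (\<lambda>n. uu n * q ^ (2 * n)) m" by (rule Sw_shift2)
  have s4: "Sw (\<lambda>n. if n = 0 then 1 else 0) m = 1" by (rule Sw_single)
  show ?thesis unfolding Sw_rec[OF good_yy] X s2 s3 s4 by algebra
qed

lemma G0_Sw: "G0 m q = Sw (\<lambda>_. 1) m" unfolding G0_def Sw_def by simp

lemma G1_Sw: "G1 m q = (of_int m + 1/2) * Sw (\<lambda>_. 1) m + Sw uu m"
proof -
  have "G1 m q = Sw (\<lambda>n. (of_int m + 1/2) * 1 + 1 * uu n) m"
    unfolding G1_def Sw_def A1_def uu_def by (simp add: algebra_simps)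
  also have "\<dots> = (of_int m + 1/2) * Sw (\<lambda>_. 1) m + 1 * Sw uu m" by (rule Sw2) simp_all
  finally show ?thesis by simp
qed

lemma G2_Sw: "G2 m q = ((of_int m + 1/2)^2 / 2) * Sw (\<lambda>_. 1) m + (of_int m + 1/2) * Sw uu m + Sw yy m"
proof -
  have pw: "((1 / 2) * (A1 m q n)^2 - Ekn 2 n q - (1 / 24) * E2 q) * Gterm m q n
     = (((of_int m + 1/2)^2 / 2) * 1 + (of_int m + 1/2) * uu n + 1 * yy n) * Gterm m q n" for n
    unfolding A1_def yy_def vv_def uu_def by (simp add: field_simps power2_eq_square)
  have "G2 m q = Sw (\<lambda>n. ((of_int m + 1/2)^2 / 2) * 1 + (of_int m + 1/2) * uu n + 1 * yy n) m"
    unfolding G2_def Sw_def pw ..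
  also have "\<dots> = ((of_int m + 1/2)^2 / 2) * Sw (\<lambda>_. 1) m + (of_int m + 1/2) * Sw uu m + 1 * Sw yy m"
    by (rule Sw3) simp_all
  finally show ?thesis by simp
qed


end



lemma int_const: fixes D :: "int \<Rightarrow> complex" assumes "\<And>m. D (m + 1) = D m" shows "D m = D 0"
proof (induction m rule: int_induct[where k=0])
  case base then show ?case by simp
next
  case (step1 i) then show ?case using assms[of i] by simp
next
  case (step2 i) then show ?case using assms[of "i - 1"] by simp
qed

context qctx begin

lemma Sw_lim: assumes "good w" shows "(\<lambda>k. Sw w (int k)) \<longlonglongrightarrow> w 0"
proof -
  define M where "M = (\<Sum>n. norm (w (Suc n) * Gterm 0 q (Suc n)))"
  have sM: "summable (\<lambda>n. norm (w (Suc n) * Gterm 0 q (Suc n)))"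
    using summable_Suc_iff[of "\<lambda>n. norm (w n * Gterm 0 q n)"] summable_Sw_norm[OF assms, of 0] by simp
  have bound: "norm (Sw w (int k) - w 0) \<le> norm q ^ k * M" for k
  proof -
    have s: "summable (\<lambda>n. w n * Gterm (int k) q n)" by (rule summable_Sw[OF assms])
    have "Sw w (int k) - w 0 = (\<Sum>n. w (Suc n) * Gterm (int k) q (Suc n))"
      unfolding Sw_def using suminf_split_head[OF s] by (simp add: Gterm_0)
    also have "norm \<dots> \<le> (\<Sum>n. norm q ^ k * norm (w (Suc n) * Gterm 0 q (Suc n)))"
    proof (rule norm_suminf_le)
      fix n
      have p: "norm q ^ (k * Suc n) \<le> norm q ^ k" by (rule power_decreasing) (use q1 in auto)
      have "norm (w (Suc n) * Gterm (int k) q (Suc n)) = norm q ^ (k * Suc n) * norm (w (Suc n) * Gterm 0 q (Suc n))"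
        unfolding Gterm_nat by (simp add: norm_mult norm_power mult_ac)
      also have "\<dots> \<le> norm q ^ k * norm (w (Suc n) * Gterm 0 q (Suc n))"
        by (rule mult_right_mono[OF p]) simp
      finally show "norm (w (Suc n) * Gterm (int k) q (Suc n)) \<le> norm q ^ k * norm (w (Suc n) * Gterm 0 q (Suc n))" .
    next
      show "summable (\<lambda>n. norm q ^ k * norm (w (Suc n) * Gterm 0 q (Suc n)))" by (rule summable_mult[OF sM])
    qed
    also have "\<dots> = norm q ^ k * M" unfolding M_def by (rule suminf_mult[OF sM])
    finally show ?thesis .
  qed
  have "(\<lambda>k. norm q ^ k * M) \<longlonglongrightarrow> 0"
    by (intro tendsto_mult_left_zero LIMSEQ_realpow_zero) (use q1 in auto)
  then have "(\<lambda>k. Sw w (int k) - w 0) \<longlonglongrightarrow> 0"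
    by (rule Lim_null_comparison[rotated]) (simp add: bound)
  then show ?thesis by (rule LIM_zero_cancel)
qed

lemma lim_Suc: assumes "good w" shows "(\<lambda>k. Sw w (int k + 1)) \<longlonglongrightarrow> w 0"
proof -
  have "(\<lambda>k. Sw w (int (Suc k))) \<longlonglongrightarrow> w 0" by (rule LIMSEQ_Suc[OF Sw_lim[OF assms]])
  moreover have "(\<lambda>k. Sw w (int (Suc k))) = (\<lambda>k. Sw w (int k + 1))" by (rule ext) (simp add: add.commute)
  ultimately show ?thesis by simp
qed

lemma lP: "(\<lambda>k. Sw (\<lambda>_. 1) (int k)) \<longlonglongrightarrow> 1" using Sw_lim[OF good_one[of 1]] by simp
lemma lP': "(\<lambda>k. Sw (\<lambda>_. 1) (int k + 1)) \<longlonglongrightarrow> 1" using lim_Suc[OF good_one[of 1]] by simp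
lemma lU: "(\<lambda>k. Sw uu (int k)) \<longlonglongrightarrow> uu 0" by (rule Sw_lim[OF good_uu])
lemma lU': "(\<lambda>k. Sw uu (int k + 1)) \<longlonglongrightarrow> uu 0" by (rule lim_Suc[OF good_uu])
lemma lV: "(\<lambda>k. Sw yy (int k)) \<longlonglongrightarrow> yy 0" by (rule Sw_lim[OF good_yy])
lemma lV': "(\<lambda>k. Sw yy (int k + 1)) \<longlonglongrightarrow> yy 0" by (rule lim_Suc[OF good_yy])
lemma lS0: "(\<lambda>k. Sw sg (int k)) \<longlonglongrightarrow> sg 0" by (rule Sw_lim[OF good_sg])
lemma lS1: "(\<lambda>k. Sw s1 (int k)) \<longlonglongrightarrow> s1 0" by (rule Sw_lim[OF good_s1])

lemma uu0: "uu 0 = - 2 * Ekn 1 0 q" by (simp add: uu_def)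
lemma sg0: "sg 0 = 0" by (simp add: sg_def)
lemma s10: "s1 0 = 0" by (simp add: s1_def sg_def)

lemma sg_shift: "Sw sg (m + 1) = Sw sg m + 1 - Sw (\<lambda>_. 1) (m + 1)"
proof -
  have "Sw (\<lambda>n. sg n * q ^ n) m - Sw sg m = Sw (\<lambda>n. 1 * (sg n * q ^ n) + (-1) * sg n) m"
    by (subst Sw2) simp_all
  also have "\<dots> = Sw (\<lambda>n. 1 * (if n = 0 then 1 else 0) + (-1) * q ^ n) m"
  proof (rule arg_cong[where f="\<lambda>f. Sw f m"], rule ext)
    fix n show "1 * (sg n * q ^ n) + (-1) * sg n = 1 * (if n = 0 then 1 else 0) + (-1) * q ^ n"
    proof (cases "n = 0")
      case True then show ?thesis by (simp add: sg_def)
    next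
      case False
      have nz: "1 - q ^ n \<noteq> 0" using False om_nz' by simp
      show ?thesis using False aux_sg[OF nz] by (simp add: sg_def)
    qed
  qed
  also have "\<dots> = 1 * 1 + (-1) * Sw (\<lambda>n. q ^ n) m"
    by (subst Sw2) (simp_all add: Sw_single)
  finally have X: "Sw (\<lambda>n. sg n * q ^ n) m - Sw sg m = 1 * 1 + (-1) * Sw (\<lambda>n. q ^ n) m" .
  have s1': "Sw sg (m + 1) = Sw (\<lambda>n. sg n * q ^ n) m" by (rule Sw_shift1)
  have s2': "Sw (\<lambda>_. 1) (m + 1) = Sw (\<lambda>n. q ^ n) m" using Sw_shift1[of "\<lambda>_. 1" m] by simp
  show ?thesis unfolding s1' s2' by (rule use_eq1[where K=1, OF _ X]) algebra
qed

lemma s1_shift: "Sw s1 (m + 1) = Sw s1 m - Sw uu (m + 1) - 2 * Ekn 1 0 q - Sw sg m"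
proof -
  have "Sw (\<lambda>n. s1 n * q ^ n) m - Sw s1 m = Sw (\<lambda>n. 1 * (s1 n * q ^ n) + (-1) * s1 n) m"
    by (subst Sw2) simp_all
  also have "\<dots> = Sw (\<lambda>n. 1 * (if n = 0 then - 2 * Ekn 1 0 q else 0) + (-1) * (uu n * q ^ n) + (-1) * sg n) m"
  proof (rule arg_cong[where f="\<lambda>f. Sw f m"], rule ext)
    fix n show "1 * (s1 n * q ^ n) + (-1) * s1 n = 1 * (if n = 0 then - 2 * Ekn 1 0 q else 0) + (-1) * (uu n * q ^ n) + (-1) * sg n"
    proof (cases "n = 0")
      case True then show ?thesis by (simp add: s1_def sg_def uu_def)
    next
      case False
      have nz: "1 - q ^ n \<noteq> 0" using False om_nz' by simp
      show ?thesis using False aux_s1[OF nz, of "uu n"] by (simp add: s1_def sg_def)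
    qed
  qed
  also have "\<dots> = 1 * (- 2 * Ekn 1 0 q) + (-1) * Sw (\<lambda>n. uu n * q ^ n) m + (-1) * Sw sg m"
    by (subst Sw3) (simp_all add: Sw_single)
  finally have X: "Sw (\<lambda>n. s1 n * q ^ n) m - Sw s1 m = 1 * (- 2 * Ekn 1 0 q) + (-1) * Sw (\<lambda>n. uu n * q ^ n) m + (-1) * Sw sg m" .
  have s1': "Sw s1 (m + 1) = Sw (\<lambda>n. s1 n * q ^ n) m" by (rule Sw_shift1)
  have s2': "Sw uu (m + 1) = Sw (\<lambda>n. uu n * q ^ n) m" by (rule Sw_shift1)
  show ?thesis unfolding s1' s2' by (rule use_eq1[where K=1, OF _ X]) algebra
qed

lemma stmt0_term:
  "(-1) ^ Suc n * q ^ (Suc n * (Suc n + 1) div 2) / (qpoch q q (Suc n)) ^ 2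
     * q powi (m * int (Suc n) + int (Suc n)) / (1 - q ^ Suc n) = sg (Suc n) * Gterm m q (Suc n)"
proof -
  have p: "q powi (m * int (Suc n) + int (Suc n)) = q powi (m * int (Suc n)) * q ^ Suc n"
    by (simp only: power_int_add[OF disjI1[OF q0]] power_int_of_nat)
  show ?thesis unfolding p Gterm_def sg_def by (simp add: mult_ac)
qed

lemma stmt0: "(\<Sum>n. (-1) ^ Suc n * q ^ (Suc n * (Suc n + 1) div 2) / (qpoch q q (Suc n)) ^ 2
                 * q powi (m * int (Suc n) + int (Suc n)) / (1 - q ^ Suc n)) = Sw sg m"
proof -
  have "(\<Sum>n. (-1) ^ Suc n * q ^ (Suc n * (Suc n + 1) div 2) / (qpoch q q (Suc n)) ^ 2
                 * q powi (m * int (Suc n) + int (Suc n)) / (1 - q ^ Suc n))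
      = (\<Sum>n. sg (Suc n) * Gterm m q (Suc n))" by (simp only: stmt0_term)
  also have "\<dots> = Sw sg m - sg 0 * Gterm m q 0"
    unfolding Sw_def by (rule suminf_split_head[OF summable_Sw[OF good_sg]])
  also have "\<dots> = Sw sg m" by (simp add: sg0)
  finally show ?thesis .
qed

lemma stmt1: "(\<Sum>n. (-1) ^ Suc n * q ^ (Suc n * (Suc n + 1) div 2) / (qpoch q q (Suc n)) ^ 2
                 * q powi (m * int (Suc n) + int (Suc n)) / (1 - q ^ Suc n)
                 * (of_nat (Suc n) + of_int m + 1 / 2 - 2 * Ekn 1 (Suc n) q
                    + 1 / (1 - q ^ Suc n))) = (of_int m + 1/2) * Sw sg m + Sw s1 m"
proof -
  define g where "g n = (of_int m + 1/2) * sg n + 1 * s1 n" for n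
  have gg: "good g" unfolding g_def by simp
  have "(\<Sum>n. (-1) ^ Suc n * q ^ (Suc n * (Suc n + 1) div 2) / (qpoch q q (Suc n)) ^ 2
                 * q powi (m * int (Suc n) + int (Suc n)) / (1 - q ^ Suc n)
                 * (of_nat (Suc n) + of_int m + 1 / 2 - 2 * Ekn 1 (Suc n) q
                    + 1 / (1 - q ^ Suc n))) = (\<Sum>n. g (Suc n) * Gterm m q (Suc n))"
  proof -
    have pw: "sg (Suc n) * Gterm m q (Suc n) * (of_nat (Suc n) + of_int m + 1 / 2 - 2 * Ekn 1 (Suc n) q
                    + 1 / (1 - q ^ Suc n)) = g (Suc n) * Gterm m q (Suc n)" for n
      unfolding g_def s1_def uu_def by algebra
    show ?thesis unfolding stmt0_term pw ..
  qed
  also have "\<dots> = Sw g m - g 0 * Gterm m q 0"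
    unfolding Sw_def by (rule suminf_split_head[OF summable_Sw[OF gg]])
  also have "\<dots> = Sw g m" by (simp add: g_def sg0 s10)
  also have "\<dots> = (of_int m + 1/2) * Sw sg m + 1 * Sw s1 m" unfolding g_def by (rule Sw2) simp_all
  finally show ?thesis by simp
qed

lemma recP': "Sw (\<lambda>_. 1) (m + 2) = (2 - q powi (m + 1)) * Sw (\<lambda>_. 1) (m + 1) - Sw (\<lambda>_. 1) m + 0"
  by (rule solveR[OF recP])
lemma recU': "Sw uu (m + 2) = (2 - q powi (m + 1)) * Sw uu (m + 1) - Sw uu m + (Sw (\<lambda>_. 1) m - Sw (\<lambda>_. 1) (m + 2))"
  by (rule solveR[OF recU])
lemma recV': "Sw yy (m + 2) = (2 - q powi (m + 1)) * Sw yy (m + 1) - Sw yy m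
   + (1 - (Sw (\<lambda>_. 1) (m + 2) + Sw (\<lambda>_. 1) m) / 2 - Sw uu (m + 2) + Sw uu m)"
  by (rule solveR[OF recV])

lemma ofi1: "(of_int (m + 1) :: complex) = of_int m + 1" by simp
lemma ofi2: "(of_int (m + 2) :: complex) = of_int m + 2" by simp

lemma recG0': "G0 (m + 2) q = (2 - q powi (m + 1)) * G0 (m + 1) q - G0 m q + 0"
  unfolding G0_Sw by (rule recP')

lemma recG1': "G1 (m + 2) q = (2 - q powi (m + 1)) * G1 (m + 1) q - G1 m q + 0"
  unfolding G1_Sw ofi1 ofi2 recP' recU' by algebra

lemma recG2': "G2 (m + 2) q = (2 - q powi (m + 1)) * G2 (m + 1) q - G2 m q + 1"
  unfolding G2_Sw ofi1 ofi2 recP' recU' recV' by (simp add: field_simps power2_eq_square)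

end

context qctx begin


lemma W_val: "G1 m q * G0 (m + 1) q - G1 (m + 1) q * G0 m q = -1"
proof -
  define D where "D m = G1 m q * G0 (m + 1) q - G1 (m + 1) q * G0 m q" for m
  have step: "D (m + 1) = D m" for m
  proof -
    have e: "m + 1 + 1 = m + 2" by simp
    show ?thesis unfolding D_def e recG0' recG1' by algebra
  qed
  have c: "D m = D 0" for m by (rule int_const[of D]) (rule step)
  have e: "D (int k) = Sw uu (int k) * Sw (\<lambda>_. 1) (int k + 1) - Sw (\<lambda>_. 1) (int k) * Sw (\<lambda>_. 1) (int k + 1) - Sw uu (int k + 1) * Sw (\<lambda>_. 1) (int k)" for k
    unfolding D_def G1_Sw G0_Sw ofi1 by algebra
  have "(\<lambda>k. Sw uu (int k) * Sw (\<lambda>_. 1) (int k + 1) - Sw (\<lambda>_. 1) (int k) * Sw (\<lambda>_. 1) (int k + 1) - Sw uu (int k + 1) * Sw (\<lambda>_. 1) (int k))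
     \<longlonglongrightarrow> uu 0 * 1 - 1 * 1 - uu 0 * 1"
    by (intro tendsto_diff tendsto_add tendsto_mult tendsto_const lP lP' lU lU')
  then have "(\<lambda>k. D (int k)) \<longlonglongrightarrow> -1" unfolding e by simp
  moreover have "(\<lambda>k. D (int k)) = (\<lambda>k. D 0)" by (rule ext) (rule c)
  ultimately have "(\<lambda>k. D 0) \<longlonglongrightarrow> -1" by simp
  then have "D 0 = -1" by (rule LIMSEQ_const_iff[THEN iffD1])
  then have "D m = -1" using c[of m] by simp
  then show ?thesis by (simp add: D_def)
qed


lemma L0_val: "L0 m q = 2 * Ekn 1 0 q - 1 - of_int m + Sw sg m"
proof -
  define D where "D m = L0 m q - (2 * Ekn 1 0 q - 1 - of_int m + Sw sg m)" for m
  have step: "D (m + 1) = D m" for m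
  proof -
    have e: "m + 1 + 1 = m + 2" by simp
    show ?thesis unfolding D_def L0_def e recG0' recG2' sg_shift G0_Sw[of "m + 1"] ofi1 by algebra
  qed
  have c: "D m = D 0" for m by (rule int_const[of D]) (rule step)
  have e: "D (int k) = (-1/2) * (Sw (\<lambda>_. 1) (int k) * Sw (\<lambda>_. 1) (int k + 1)) - Sw (\<lambda>_. 1) (int k) * Sw uu (int k + 1)
      + Sw (\<lambda>_. 1) (int k + 1) * Sw yy (int k) - Sw (\<lambda>_. 1) (int k) * Sw yy (int k + 1) - 2 * Ekn 1 0 q + 1/2 - Sw sg (int k)" for k
    by (rule use_eq1[where K="of_int (int k) + 1/2", OF _ W_val[of "int k"]])
       (unfold D_def L0_def G0_Sw G1_Sw G2_Sw ofi1, simp add: field_simps power2_eq_square)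
  have "(\<lambda>k. (-1/2) * (Sw (\<lambda>_. 1) (int k) * Sw (\<lambda>_. 1) (int k + 1)) - Sw (\<lambda>_. 1) (int k) * Sw uu (int k + 1)
      + Sw (\<lambda>_. 1) (int k + 1) * Sw yy (int k) - Sw (\<lambda>_. 1) (int k) * Sw yy (int k + 1) - 2 * Ekn 1 0 q + 1/2 - Sw sg (int k))
     \<longlonglongrightarrow> (-1/2) * (1 * 1) - 1 * uu 0 + 1 * yy 0 - 1 * yy 0 - 2 * Ekn 1 0 q + 1/2 - sg 0"
    by (intro tendsto_diff tendsto_add tendsto_mult tendsto_const lP lP' lU lU' lV lV' lS0)
  moreover have "(-1/2) * (1 * 1) - 1 * uu 0 + 1 * yy 0 - 1 * yy 0 - 2 * Ekn 1 0 q + 1/2 - sg 0 = (0::complex)"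
    unfolding uu0 sg0 by (simp add: field_simps)
  ultimately have "(\<lambda>k. D (int k)) \<longlonglongrightarrow> 0" unfolding e by simp
  moreover have "(\<lambda>k. D (int k)) = (\<lambda>k. D 0)" by (rule ext) (rule c)
  ultimately have "(\<lambda>k. D 0) \<longlonglongrightarrow> 0" by simp
  then have "D 0 = 0" by (rule LIMSEQ_const_iff[THEN iffD1])
  then have "D m = 0" using c[of m] by simp
  then show ?thesis by (simp add: D_def)
qed


lemma L1_val: "L1 m q = - 3 / 8 - 2 * (Ekn 1 0 q) ^ 2 + 2 * Ekn 1 0 q - Ekn 2 0 q - (1 / 24) * E2 q
         + 2 * of_int m * Ekn 1 0 q - of_int m - (of_int m) ^ 2 / 2 + ((of_int m + 1/2) * Sw sg m + Sw s1 m)"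
proof -
  define D where "D m = L1 m q - (- 3 / 8 - 2 * (Ekn 1 0 q) ^ 2 + 2 * Ekn 1 0 q - Ekn 2 0 q - (1 / 24) * E2 q
         + 2 * of_int m * Ekn 1 0 q - of_int m - (of_int m) ^ 2 / 2 + ((of_int m + 1/2) * Sw sg m + Sw s1 m))" for m
  have step: "D (m + 1) = D m" for m
  proof -
    have e: "m + 1 + 1 = m + 2" by simp
    show ?thesis unfolding D_def L1_def e recG1' recG2' sg_shift s1_shift G1_Sw[of "m + 1"] ofi1 by (simp add: field_simps power2_eq_square)
  qed
  have c: "D m = D 0" for m by (rule int_const[of D]) (rule step)
  have e: "D (int k) = (-1/2) * (Sw uu (int k) * Sw (\<lambda>_. 1) (int k + 1)) + Sw (\<lambda>_. 1) (int k + 1) * Sw yy (int k)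
      - Sw uu (int k) * Sw uu (int k + 1) + Sw uu (int k + 1) * Sw yy (int k) - Sw uu (int k) * Sw yy (int k + 1)
      + 2 * (Ekn 1 0 q)^2 - Ekn 1 0 q + Ekn 2 0 q + (1/24) * E2 q - Sw s1 (int k)" for k
    by (rule use_eq2[where Ka="- ((of_int (int k) + 1/2)^2 / 2)" and Kb="of_int (int k) + 1/2",
          OF _ W_val[of "int k"] L0_val[of "int k"]])
       (unfold D_def L1_def L0_def G0_Sw G1_Sw G2_Sw ofi1, simp add: field_simps power2_eq_square)
  have "(\<lambda>k. (-1/2) * (Sw uu (int k) * Sw (\<lambda>_. 1) (int k + 1)) + Sw (\<lambda>_. 1) (int k + 1) * Sw yy (int k)
      - Sw uu (int k) * Sw uu (int k + 1) + Sw uu (int k + 1) * Sw yy (int k) - Sw uu (int k) * Sw yy (int k + 1)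
      + 2 * (Ekn 1 0 q)^2 - Ekn 1 0 q + Ekn 2 0 q + (1/24) * E2 q - Sw s1 (int k))
     \<longlonglongrightarrow> (-1/2) * (uu 0 * 1) + 1 * yy 0 - uu 0 * uu 0 + uu 0 * yy 0 - uu 0 * yy 0
      + 2 * (Ekn 1 0 q)^2 - Ekn 1 0 q + Ekn 2 0 q + (1/24) * E2 q - s1 0"
    by (intro tendsto_diff tendsto_add tendsto_mult tendsto_const lP lP' lU lU' lV lV' lS1)
  moreover have "(-1/2) * (uu 0 * 1) + 1 * yy 0 - uu 0 * uu 0 + uu 0 * yy 0 - uu 0 * yy 0
      + 2 * (Ekn 1 0 q)^2 - Ekn 1 0 q + Ekn 2 0 q + (1/24) * E2 q - s1 0 = (0::complex)"
    unfolding yy_def vv_def uu0 s10 by (simp add: field_simps power2_eq_square)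
  ultimately have "(\<lambda>k. D (int k)) \<longlonglongrightarrow> 0" unfolding e by simp
  moreover have "(\<lambda>k. D (int k)) = (\<lambda>k. D 0)" by (rule ext) (rule c)
  ultimately have "(\<lambda>k. D 0) \<longlonglongrightarrow> 0" by simp
  then have "D 0 = 0" by (rule LIMSEQ_const_iff[THEN iffD1])
  then have "D m = 0" using c[of m] by simp
  then show ?thesis by (simp add: D_def)
qed

end



lemma mat3_eqI:
  fixes A B :: "complex^3^3"
  assumes "\<And>i j. A $ i $ j = B $ i $ j"
  shows "A = B"
  using assms by (simp add: vec_eq_iff)

lemma matrix_part:
  fixes b b' c c' e e' :: complex
  assumes W: "c * b' - c' * b = -1"
  defines "A \<equiv> vector [vector [1, e, e'], vector [0, c, c'], vector [0, b, b']] :: complex^3^3"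
  defines "B \<equiv> vector [vector [1, b' * e - b * e', - (c' * e - c * e')],
                 vector [0, - b', c'],
                 vector [0, b, - c]] :: complex^3^3"
  shows "invertible A \<and> matrix_inv A = B"
proof -
  have AB: "A ** B = mat 1"
    unfolding A_def B_def
    using W by (simp add: vec_eq_iff forall_3 matrix_matrix_mult_def sum_3 mat_def; algebra)
  have BA: "B ** A = mat 1"
    unfolding A_def B_def
    using W by (simp add: vec_eq_iff forall_3 matrix_matrix_mult_def sum_3 mat_def; algebra)
  have inv: "invertible A" unfolding invertible_def using AB BA by blast
  have "matrix_inv A = B"
  proof -
    let ?P = "\<lambda>A'. A ** A' = mat 1 \<and> A' ** A = mat 1"
    have "?P (matrix_inv A)" unfolding matrix_inv_def by (rule someI[of ?P B]) (use AB BA in blast)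
    then have "matrix_inv A = matrix_inv A ** (A ** B)" using AB by simp
    also have "\<dots> = B" using \<open>?P (matrix_inv A)\<close> by (simp add: matrix_mul_assoc)
    finally show ?thesis .
  qed
  with inv show ?thesis by blast
qed

theorem theorem2p2:
  fixes q :: complex and m :: int
  assumes "norm q < 1" and "q \<noteq> 0"
  shows "invertible (Jmat m q)
     \<and> matrix_inv (Jmat m q) =
         vector [vector [1, L0 m q, - L1 m q],
                 vector [0, - G0 (m + 1) q, G1 (m + 1) q],
                 vector [0, G0 m q, - G1 m q]]
     \<and> L0 m q = 2 * Ekn 1 0 q - 1 - of_int m
         + (\<Sum>n. (-1) ^ Suc n * q ^ (Suc n * (Suc n + 1) div 2) / (qpoch q q (Suc n)) ^ 2
                 * q powi (m * int (Suc n) + int (Suc n)) / (1 - q ^ Suc n))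
     \<and> L1 m q = - 3 / 8 - 2 * (Ekn 1 0 q) ^ 2 + 2 * Ekn 1 0 q - Ekn 2 0 q - (1 / 24) * E2 q
         + 2 * of_int m * Ekn 1 0 q - of_int m - (of_int m) ^ 2 / 2
         + (\<Sum>n. (-1) ^ Suc n * q ^ (Suc n * (Suc n + 1) div 2) / (qpoch q q (Suc n)) ^ 2
                 * q powi (m * int (Suc n) + int (Suc n)) / (1 - q ^ Suc n)
                 * (of_nat (Suc n) + of_int m + 1 / 2 - 2 * Ekn 1 (Suc n) q
                    + 1 / (1 - q ^ Suc n)))"
  proof -
  interpret Q: qctx q using assms by unfold_locales auto
  have W: "G1 m q * G0 (m + 1) q - G1 (m + 1) q * G0 m q = -1" by (rule Q.W_val)
  have M: "invertible (Jmat m q)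
     \<and> matrix_inv (Jmat m q) =
         vector [vector [1, L0 m q, - L1 m q],
                 vector [0, - G0 (m + 1) q, G1 (m + 1) q],
                 vector [0, G0 m q, - G1 m q]]"
    unfolding Jmat_def L0_def L1_def by (rule matrix_part[OF W])
  have A: "L0 m q = 2 * Ekn 1 0 q - 1 - of_int m
         + (\<Sum>n. (-1) ^ Suc n * q ^ (Suc n * (Suc n + 1) div 2) / (qpoch q q (Suc n)) ^ 2
                 * q powi (m * int (Suc n) + int (Suc n)) / (1 - q ^ Suc n))"
    unfolding Q.stmt0 by (rule Q.L0_val)
  have B: "L1 m q = - 3 / 8 - 2 * (Ekn 1 0 q) ^ 2 + 2 * Ekn 1 0 q - Ekn 2 0 q - (1 / 24) * E2 q
         + 2 * of_int m * Ekn 1 0 q - of_int m - (of_int m) ^ 2 / 2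
         + (\<Sum>n. (-1) ^ Suc n * q ^ (Suc n * (Suc n + 1) div 2) / (qpoch q q (Suc n)) ^ 2
                 * q powi (m * int (Suc n) + int (Suc n)) / (1 - q ^ Suc n)
                 * (of_nat (Suc n) + of_int m + 1 / 2 - 2 * Ekn 1 (Suc n) q
                    + 1 / (1 - q ^ Suc n)))"
    unfolding Q.stmt1 by (rule Q.L1_val)
  show ?thesis using M A B by blast
qed

end
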